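(* Let $(X,d)$ be a metric space (not necessarily complete) with $|X|\geqslant 3$, and let $T\colon X\to X$ satisfy: (i) $T$ has no periodic points of prime period $2$, i.e. $T(T(x))\neq x$ for every $x\in X$ with $Tx\neq x$; (ii) there exist $\alpha,\lambda\geqslant0$ with $2\alpha+\frac{3\lambda}{2}<1$ such that $$d(Tx,Ty)+d(Ty,Tz)+d(Tx,Tz)\leqslant \alpha\big(d(x,y)+d(y,z)+d(z,x)\big)+\lambda\big(d(x,Tx)+d(y,Ty)+d(z,Tz)\big)$$ for all pairwise distinct $x,y,z\in X$; (iii) $T$ is continuous at a point $x^*\in X$; (iv) there exists $x_0\in X$ such that the sequence of iterates $x_n=Tx_{n-1}$, $n=1,2,\dots$, has a subsequence $(x_{n_k})$ converging to $x^*$. Then $x^*$ is a fixed point of $T$, and $T$ has at most two fixed points. *)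

theory Defs
  imports "HOL-Analysis.Analysis"
begin

end

theory Submission
  imports Defs
begin

theorem theorem5p1:
  fixes T :: "'a::metric_space \<Rightarrow> 'a" and a l :: real and xs x0 :: 'a
  assumes card3: "\<exists>u v w::'a. u \<noteq> v \<and> v \<noteq> w \<and> u \<noteq> w"
    and no_per2: "\<And>x. T x \<noteq> x \<Longrightarrow> T (T x) \<noteq> x"
    and alpha_nonneg: "a \<ge> 0" and lambda_nonneg: "l \<ge> 0"
    and coeff: "2 * a + 3 * l / 2 < 1"
    and contr: "\<And>x y z. x \<noteq> y \<Longrightarrow> y \<noteq> z \<Longrightarrow> x \<noteq> z \<Longrightarrow>
        dist (T x) (T y) + dist (T y) (T z) + dist (T x) (T z)
          \<le> a * (dist x y + dist y z + dist z x) + l * (dist x (T x) + dist y (T y) + dist z (T z))"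
    and cont: "isCont T xs"
    and subseq: "\<exists>r::nat \<Rightarrow> nat. strict_mono r \<and> (\<lambda>k. (T ^^ (r k)) x0) \<longlonglongrightarrow> xs"
  shows "T xs = xs \<and> finite {x. T x = x} \<and> card {x. T x = x} \<le> 2"
proof -
  define x where "x n = (T ^^ n) x0" for n
  have xS: "x (Suc n) = T (x n)" for n by (simp add: x_def)
  have dlim: "(\<lambda>n. dist (x n) (x (Suc n))) \<longlonglongrightarrow> 0"
  proof (cases "\<exists>N. T (x N) = x N")
    case True
    then obtain N where N: "T (x N) = x N" by blast
    have "x n = x N" if "n \<ge> N" for n
      using that
    proof (induction n rule: dec_induct)
      case base then show ?case by simp
    next
      case (step m) then show ?case by (simp add: xS N)
    qed
    then have "eventually (\<lambda>n. dist (x n) (x (Suc n)) = 0) sequentially"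
      unfolding eventually_sequentially by (metis le_SucI dist_self)
    then show ?thesis by (rule tendsto_eventually)
  next
    case False
    define p where "p n = dist (x n) (x (Suc n)) + dist (x (Suc n)) (x (Suc (Suc n))) + dist (x n) (x (Suc (Suc n)))" for n
    define h where "h = (a + l) / (1 - l / 2)"
    have lpos: "1 - l / 2 > 0" using coeff alpha_nonneg by linarith
    have h0: "h \<ge> 0" unfolding h_def using lpos alpha_nonneg lambda_nonneg by simp
    have h1: "h < 1" unfolding h_def using lpos coeff alpha_nonneg by (simp add: divide_less_eq)
    have side: "dist u v \<le> (dist u v + dist v w + dist u w) / 2" for u v w :: 'a
      using dist_triangle2[of u v w] dist_commute[of u w] dist_commute[of v w] by (simp add: field_simps)
    have side2: "dist v w \<le> (dist u v + dist v w + dist u w) / 2" for u v w :: 'a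
      using dist_triangle2[of v w u] dist_commute[of u v] dist_commute[of u w] by (simp add: field_simps)
    have step: "p (Suc n) \<le> h * p n" for n
    proof -
      have d1: "x n \<noteq> x (Suc n)" using False xS by metis
      have d2: "x (Suc n) \<noteq> x (Suc (Suc n))" using False xS by metis
      have d3: "x n \<noteq> x (Suc (Suc n))" using False xS no_per2 by metis
      have c: "p (Suc n) \<le> a * p n + l * (dist (x n) (x (Suc n)) + dist (x (Suc n)) (x (Suc (Suc n))) + dist (x (Suc (Suc n))) (x (Suc (Suc (Suc n)))))"
        using contr[OF d1 d2 d3] unfolding p_def xS by (simp add: dist_commute add_ac)
      have e1: "dist (x n) (x (Suc n)) \<le> p n / 2" using side unfolding p_def by blast
      have e2: "dist (x (Suc n)) (x (Suc (Suc n))) \<le> p n / 2" using side2 unfolding p_def by blast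
      have e3: "dist (x (Suc (Suc n))) (x (Suc (Suc (Suc n)))) \<le> p (Suc n) / 2" using side2 unfolding p_def by blast
      have "l * (dist (x n) (x (Suc n)) + dist (x (Suc n)) (x (Suc (Suc n))) + dist (x (Suc (Suc n))) (x (Suc (Suc (Suc n)))))
          \<le> l * (p n + p (Suc n) / 2)"
        using e1 e2 e3 lambda_nonneg by (intro mult_left_mono) auto
      with c have "p (Suc n) * (1 - l / 2) \<le> (a + l) * p n" by (simp add: algebra_simps)
      then show ?thesis unfolding h_def using lpos by (simp add: field_simps)
    qed
    have pb: "p n \<le> h ^ n * p 0" for n
    proof (induction n)
      case 0 then show ?case by simp
    next
      case (Suc n)
      have "p (Suc n) \<le> h * p n" by (rule step)
      also have "\<dots> \<le> h * (h ^ n * p 0)" using Suc h0 by (rule mult_left_mono)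
      finally show ?case by simp
    qed
    have "(\<lambda>n. h ^ n * p 0) \<longlonglongrightarrow> 0 * p 0"
      by (intro tendsto_mult LIMSEQ_power_zero tendsto_const) (use h0 h1 in auto)
    then have lim0: "(\<lambda>n. h ^ n * p 0) \<longlonglongrightarrow> 0" by simp
    show ?thesis
    proof (rule real_tendsto_sandwich[OF _ _ tendsto_const lim0])
      show "\<forall>\<^sub>F n in sequentially. 0 \<le> dist (x n) (x (Suc n))" by simp
      show "\<forall>\<^sub>F n in sequentially. dist (x n) (x (Suc n)) \<le> h ^ n * p 0"
        using pb unfolding p_def by (intro always_eventually allI) (smt (verit) zero_le_dist)
    qed
  qed
  obtain r :: "nat \<Rightarrow> nat" where r: "strict_mono r" and rl: "(\<lambda>k. x (r k)) \<longlonglongrightarrow> xs"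
    using subseq unfolding x_def by blast
  have l2: "(\<lambda>k. x (Suc (r k))) \<longlonglongrightarrow> T xs"
    unfolding xS using isCont_tendsto_compose[OF cont rl] .
  have l3: "(\<lambda>k. dist (x (r k)) (x (Suc (r k)))) \<longlonglongrightarrow> 0"
    using LIMSEQ_subseq_LIMSEQ[OF dlim r] by (simp add: o_def)
  have l4: "(\<lambda>k. dist (x (r k)) xs + dist (x (r k)) (x (Suc (r k))) + dist (x (Suc (r k))) (T xs)) \<longlonglongrightarrow> dist xs xs + 0 + dist (T xs) (T xs)"
    by (intro tendsto_add tendsto_dist rl l2 l3 tendsto_const)
  have "dist xs (T xs) \<le> 0"
  proof (rule LIMSEQ_le_const[OF l4[simplified]])
    show "\<exists>N. \<forall>n\<ge>N. dist xs (T xs) \<le> dist (x (r n)) xs + dist (x (r n)) (x (Suc (r n))) + dist (x (Suc (r n))) (T xs)"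
      by (metis dist_triangle dist_commute dist_triangle3 order_trans add_right_mono)
  qed
  then have fx: "T xs = xs" by simp
  have no3: False if "T u = u" "T v = v" "T w = w" "u \<noteq> v" "v \<noteq> w" "u \<noteq> w" for u v w
  proof -
    have "dist u v + dist v w + dist u w \<le> a * (dist u v + dist v w + dist u w)"
      using contr[OF that(4,5,6)] that(1-3) by (simp add: dist_commute)
    moreover have "dist u v + dist v w + dist u w > 0" using that(4) by (simp add: add_pos_nonneg)
    moreover have "a < 1" using coeff lambda_nonneg by linarith
    ultimately show False by (smt (verit) mult_less_cancel_right2 mult.commute)
  qed
  define S where "S = {x. T x = x}"
  have "\<exists>q. S \<subseteq> {xs, q}"
  proof (cases "S \<subseteq> {xs}")
    case True then show ?thesis by blast
  next
    case False
    then obtain q where q: "q \<in> S" "q \<noteq> xs" by blast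
    have "S \<subseteq> {xs, q}" using no3 fx q unfolding S_def by blast
    then show ?thesis by blast
  qed
  then obtain q where sq: "S \<subseteq> {xs, q}" by blast
  have fin: "finite S" using sq finite_subset by blast
  have "card S \<le> card {xs, q}" using sq by (intro card_mono) auto
  also have "\<dots> \<le> 2" by (simp add: card_insert_if)
  finally show ?thesis using fx fin unfolding S_def by simp
qed

end
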